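(* Let $P$ and $Q$ be projections in a von Neumann algebra $\mathcal{M}$. Then for every $T\in P\mathcal{M}Q$ and every $\varepsilon>0$ there exists $Y\in P\mathcal{M}Q$ such that $\|T-Y\|<\varepsilon$ and $C_Y=C_PC_Q$.
   Context: For an operator $T$ in a von Neumann algebra $\mathcal{M}$, the central support $C_T$ is the smallest central projection $Z$ of $\mathcal{M}$ with $ZT=T$. *)

theory Defs
  imports "HOL-Analysis.Analysis"
begin

text \<open>A complex Hilbert space: a real Banach space equipped with a complex scalar
  multiplication extending the real one and a complex inner product
  (linear in the second argument, conjugate-symmetric) inducing the norm.\<close>

class chilbert = banach +
  fixes scaleC :: "complex \<Rightarrow> 'a \<Rightarrow> 'a"
    and cinner :: "'a \<Rightarrow> 'a \<Rightarrow> complex"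
  assumes scaleC_add_right: "scaleC c (x + y) = scaleC c x + scaleC c y"
    and scaleC_add_left: "scaleC (c + d) x = scaleC c x + scaleC d x"
    and scaleC_scaleC: "scaleC c (scaleC d x) = scaleC (c * d) x"
    and scaleC_one: "scaleC 1 x = x"
    and scaleR_scaleC: "scaleR r x = scaleC (complex_of_real r) x"
    and cinner_add_right: "cinner x (y + z) = cinner x y + cinner x z"
    and cinner_scaleC_right: "cinner x (scaleC c y) = c * cinner x y"
    and cinner_commute: "cinner y x = cnj (cinner x y)"
    and norm_cinner: "norm x = sqrt (Re (cinner x x))"

definition bounded_clinear :: "('a::chilbert \<Rightarrow> 'a) \<Rightarrow> bool" where
  "bounded_clinear T \<longleftrightarrow> bounded_linear T \<and> (\<forall>c x. T (scaleC c x) = scaleC c (T x))"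

definition adj :: "('a::chilbert \<Rightarrow> 'a) \<Rightarrow> ('a \<Rightarrow> 'a)" where
  "adj T = (SOME S. \<forall>x y. cinner (T x) y = cinner x (S y))"

definition commutant :: "('a::chilbert \<Rightarrow> 'a) set \<Rightarrow> ('a \<Rightarrow> 'a) set" where
  "commutant S = {T. bounded_clinear T \<and> (\<forall>A\<in>S. T \<circ> A = A \<circ> T)}"

text \<open>Von Neumann algebra: a self-adjoint set of bounded operators equal to its
  double commutant (equivalently, a unital weakly closed *-subalgebra).\<close>
definition von_neumann_algebra :: "('a::chilbert \<Rightarrow> 'a) set \<Rightarrow> bool" where
  "von_neumann_algebra M \<longleftrightarrow>
     M \<subseteq> {T. bounded_clinear T} \<and> (\<forall>T\<in>M. adj T \<in> M) \<and> commutant (commutant M) = M"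

definition is_projection :: "('a::chilbert \<Rightarrow> 'a) set \<Rightarrow> ('a \<Rightarrow> 'a) \<Rightarrow> bool" where
  "is_projection M P \<longleftrightarrow> P \<in> M \<and> P \<circ> P = P \<and> adj P = P"

definition central_projection :: "('a::chilbert \<Rightarrow> 'a) set \<Rightarrow> ('a \<Rightarrow> 'a) \<Rightarrow> bool" where
  "central_projection M Z \<longleftrightarrow> is_projection M Z \<and> Z \<in> commutant M"

text \<open>Central support: the smallest central projection Z with Z T = T
  (order of projections: Z \<le> Z' iff Z Z' = Z).\<close>
definition central_support :: "('a::chilbert \<Rightarrow> 'a) set \<Rightarrow> ('a \<Rightarrow> 'a) \<Rightarrow> ('a \<Rightarrow> 'a)" where
  "central_support M T = (THE Z. central_projection M Z \<and> Z \<circ> T = T \<and>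
      (\<forall>Z'. central_projection M Z' \<and> Z' \<circ> T = T \<longrightarrow> Z \<circ> Z' = Z))"

definition corner :: "('a::chilbert \<Rightarrow> 'a) \<Rightarrow> ('a \<Rightarrow> 'a) set \<Rightarrow> ('a \<Rightarrow> 'a) \<Rightarrow> ('a \<Rightarrow> 'a) set" where
  "corner P M Q = {P \<circ> X \<circ> Q | X. X \<in> M}"

end

theory Submission
  imports Defs
begin

lemma scaleC_zero_right[simp]: "scaleC c (0::'a::chilbert) = 0"
  by (metis add_cancel_right_right scaleC_add_right)

lemma scaleC_zero_left[simp]: "scaleC 0 (x::'a::chilbert) = 0"
  by (metis add_cancel_right_right add_0 scaleC_add_left)

lemma scaleC_of_real: "scaleC (complex_of_real r) (x::'a::chilbert) = scaleR r x"
  by (simp add: scaleR_scaleC)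

lemma scaleC_minus_right: "scaleC c (- (x::'a::chilbert)) = - scaleC c x"
  by (metis add.right_inverse add_eq_0_iff scaleC_add_right scaleC_zero_right)

lemma scaleC_diff_right: "scaleC c ((x::'a::chilbert) - y) = scaleC c x - scaleC c y"
  by (metis diff_conv_add_uminus scaleC_add_right scaleC_minus_right)

lemma scaleC_sum_right: "scaleC c (sum (f::_\<Rightarrow>'a::chilbert) A) = (\<Sum>i\<in>A. scaleC c (f i))"
  by (induction A rule: infinite_finite_induct) (auto simp: scaleC_add_right)

lemma cinner_add_left: "cinner ((x::'a::chilbert) + y) z = cinner x z + cinner y z"
  by (metis cinner_add_right cinner_commute complex_cnj_add)

lemma cinner_scaleC_left: "cinner (scaleC c (x::'a::chilbert)) y = cnj c * cinner x y"
  by (metis cinner_commute cinner_scaleC_right complex_cnj_mult)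

lemma cinner_zero_right[simp]: "cinner (x::'a::chilbert) 0 = 0"
  by (metis add_cancel_right_right cinner_add_right)

lemma cinner_zero_left[simp]: "cinner 0 (x::'a::chilbert) = 0"
  by (metis add_cancel_right_right cinner_add_left)

lemma cinner_minus_right: "cinner (x::'a::chilbert) (- y) = - cinner x y"
  by (metis add.right_inverse add_eq_0_iff cinner_add_right cinner_zero_right)

lemma cinner_minus_left: "cinner (- (x::'a::chilbert)) y = - cinner x y"
  by (metis add.right_inverse add_eq_0_iff cinner_add_left cinner_zero_left)

lemma cinner_diff_right: "cinner (x::'a::chilbert) (y - z) = cinner x y - cinner x z"
  by (simp only: diff_conv_add_uminus cinner_add_right cinner_minus_right)

lemma cinner_diff_left: "cinner ((x::'a::chilbert) - y) z = cinner x z - cinner y z"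
  by (simp only: diff_conv_add_uminus cinner_add_left cinner_minus_left)

lemma cinner_sum_right: "cinner (x::'a::chilbert) (sum f A) = (\<Sum>i\<in>A. cinner x (f i))"
  by (induction A rule: infinite_finite_induct) (auto simp: cinner_add_right)

lemma cinner_sum_left: "cinner (sum (f::_\<Rightarrow>'a::chilbert) A) y = (\<Sum>i\<in>A. cinner (f i) y)"
  by (induction A rule: infinite_finite_induct) (auto simp: cinner_add_left)

lemma cinner_scaleR_right: "cinner (x::'a::chilbert) (scaleR r y) = of_real r * cinner x y"
  by (simp add: scaleR_scaleC cinner_scaleC_right)

lemma cinner_scaleR_left: "cinner (scaleR r (x::'a::chilbert)) y = of_real r * cinner x y"
  by (simp add: scaleR_scaleC cinner_scaleC_left)

lemma cinner_self_real: "Im (cinner (x::'a::chilbert) x) = 0"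
  by (metis cinner_commute cnj.sel(2) neg_equal_zero)

lemma cinner_self: "cinner (x::'a::chilbert) x = complex_of_real ((norm x)^2)"
proof -
  have n: "norm x = sqrt (Re (cinner x x))" by (rule norm_cinner)
  have "Re (cinner x x) \<ge> 0"
  proof (rule ccontr)
    assume "\<not> ?thesis"
    then have "sqrt (Re (cinner x x)) < 0" by simp
    with n show False by (metis norm_ge_zero not_le)
  qed
  then have "(norm x)^2 = Re (cinner x x)" using n by simp
  then show ?thesis using cinner_self_real[of x] by (simp add: complex_eq_iff)
qed

lemma Re_cinner_self: "Re (cinner (x::'a::chilbert) x) = (norm x)^2"
  by (simp add: cinner_self)

lemma cinner_self_eq_0[simp]: "cinner (x::'a::chilbert) x = 0 \<longleftrightarrow> x = 0"
  by (simp add: cinner_self)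

lemma cinner_ext_right:
  assumes "\<And>z. cinner z (x::'a::chilbert) = cinner z y" shows "x = y"
proof -
  have "cinner (x - y) (x - y) = 0" using assms by (simp add: cinner_diff_right)
  then show ?thesis by simp
qed

lemma norm_scaleC: "norm (scaleC c (x::'a::chilbert)) = cmod c * norm x"
proof -
  have "(norm (scaleC c x))^2 = Re (cinner (scaleC c x) (scaleC c x))" by (simp add: Re_cinner_self)
  also have "\<dots> = Re (cnj c * c * cinner x x)" by (metis cinner_scaleC_left cinner_scaleC_right mult.assoc mult.commute)
  also have "cnj c * c = complex_of_real ((cmod c)^2)" by (metis complex_norm_square mult.commute)
  also have "Re (complex_of_real ((cmod c)^2) * cinner x x) = (cmod c)^2 * (norm x)^2"
    by (simp add: cinner_self)
  also have "\<dots> = (cmod c * norm x)^2" by (simp add: power_mult_distrib)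
  finally show ?thesis by (simp add: power2_eq_iff_nonneg)
qed

lemma norm_add_sq: "(norm ((x::'a::chilbert) + y))^2 = (norm x)^2 + (norm y)^2 + 2 * Re (cinner x y)"
proof -
  have "(norm (x + y))^2 = Re (cinner (x+y) (x+y))" by (simp add: Re_cinner_self)
  also have "\<dots> = Re (cinner x x) + Re (cinner y y) + Re (cinner x y) + Re (cinner y x)"
    by (simp add: cinner_add_left cinner_add_right)
  also have "Re (cinner y x) = Re (cinner x y)" by (metis cinner_commute complex_cnj_cnj cnj.sel(1))
  finally show ?thesis by (simp add: Re_cinner_self)
qed

lemma norm_diff_sq: "(norm ((x::'a::chilbert) - y))^2 = (norm x)^2 + (norm y)^2 - 2 * Re (cinner x y)"
  using norm_add_sq[of x "-y"] by (simp add: cinner_minus_right)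

lemma pythag: "cinner (x::'a::chilbert) y = 0 \<Longrightarrow> (norm (x + y))^2 = (norm x)^2 + (norm y)^2"
  by (simp add: norm_add_sq)

lemma Re_cinner_le: "Re (cinner (x::'a::chilbert) y) \<le> norm x * norm y"
proof (cases "x = 0 \<or> y = 0")
  case True then show ?thesis by auto
next
  case False
  then have nx: "norm x > 0" and ny: "norm y > 0" by auto
  have "0 \<le> (norm (scaleR (norm y) x - scaleR (norm x) y))^2" by simp
  also have "\<dots> = 2 * (norm x)^2 * (norm y)^2 - 2 * (norm x * norm y) * Re (cinner x y)"
    by (simp add: norm_diff_sq cinner_scaleR_left cinner_scaleR_right power_mult_distrib algebra_simps)
  finally have "(norm x * norm y) * Re (cinner x y) \<le> (norm x * norm y) * (norm x * norm y)"
    by (simp add: power2_eq_square algebra_simps)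
  then show ?thesis using nx ny by (simp add: mult_le_cancel_left_pos)
qed

lemma cinner_cauchy_schwarz: "cmod (cinner (x::'a::chilbert) y) \<le> norm x * norm y"
proof (cases "cinner x y = 0")
  case True then show ?thesis by simp
next
  case False
  define c where "c = cnj (cinner x y) / cmod (cinner x y)"
  have cm: "cmod c = 1" using False by (simp add: c_def norm_divide)
  have "cinner x (scaleC c y) = complex_of_real (cmod (cinner x y))"
    using False by (simp add: c_def cinner_scaleC_right complex_norm_square[symmetric] power2_eq_square field_simps)
  then have "cmod (cinner x y) = Re (cinner x (scaleC c y))" by simp
  also have "\<dots> \<le> norm x * norm (scaleC c y)" by (rule Re_cinner_le)
  also have "\<dots> = norm x * norm y" by (simp add: norm_scaleC cm)
  finally show ?thesis .
qed

lemma bounded_linear_cinner_right: "bounded_linear (cinner (x::'a::chilbert))"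
  apply (rule bounded_linear_intro[where K="norm x"])
    apply (simp add: cinner_add_right)
   apply (simp add: cinner_scaleR_right scaleR_conv_of_real)
  by (metis cinner_cauchy_schwarz mult.commute)

lemma bounded_linear_cinner_left: "bounded_linear (\<lambda>x. cinner (x::'a::chilbert) y)"
  apply (rule bounded_linear_intro[where K="norm y"])
    apply (simp add: cinner_add_left)
   apply (simp add: cinner_scaleR_left scaleR_conv_of_real)
  by (metis cinner_cauchy_schwarz mult.commute)

lemma bounded_linear_scaleC: "bounded_linear (scaleC c :: 'a::chilbert \<Rightarrow> 'a)"
  apply (rule bounded_linear_intro[where K="cmod c"])
    apply (simp add: scaleC_add_right)
   apply (simp add: scaleR_scaleC scaleC_scaleC mult.commute)
  by (simp add: norm_scaleC mult.commute)

lemma scaleC_minus1: "scaleC (-1) (x::'a::chilbert) = - x"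
  using scaleR_scaleC[of "-1" x] by simp

lemma bounded_clinearD:
  assumes "bounded_clinear T"
  shows "bounded_linear T" "T (scaleC c x) = scaleC c (T x)"
  using assms unfolding bounded_clinear_def by auto


definition csubspace :: "'a::chilbert set \<Rightarrow> bool" where
  "csubspace K \<longleftrightarrow> 0 \<in> K \<and> (\<forall>x\<in>K. \<forall>y\<in>K. x + y \<in> K) \<and> (\<forall>c. \<forall>x\<in>K. scaleC c x \<in> K)"

lemma csubspace_0: "csubspace K \<Longrightarrow> 0 \<in> K"
  and csubspace_add: "csubspace K \<Longrightarrow> x \<in> K \<Longrightarrow> y \<in> K \<Longrightarrow> x + y \<in> K"
  and csubspace_scaleC: "csubspace K \<Longrightarrow> x \<in> K \<Longrightarrow> scaleC c x \<in> K"
  unfolding csubspace_def by auto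

lemma csubspace_scaleR: "csubspace K \<Longrightarrow> x \<in> K \<Longrightarrow> scaleR r x \<in> K"
  by (simp add: csubspace_scaleC scaleR_scaleC)

lemma csubspace_minus: "csubspace K \<Longrightarrow> x \<in> K \<Longrightarrow> - x \<in> K"
  using csubspace_scaleR[of K x "-1"] by simp

lemma csubspace_diff: "csubspace K \<Longrightarrow> x \<in> K \<Longrightarrow> y \<in> K \<Longrightarrow> x - y \<in> K"
  by (metis csubspace_add csubspace_minus diff_conv_add_uminus)

lemma parallelogram: "(norm ((a::'a::chilbert) + b))^2 + (norm (a - b))^2 = 2 * (norm a)^2 + 2 * (norm b)^2"
proof -
  have "(norm (a + b))^2 = (norm a)^2 + (norm b)^2 + 2 * Re (cinner a b)" by (rule norm_add_sq)
  moreover have "(norm (a - b))^2 = (norm a)^2 + (norm b)^2 - 2 * Re (cinner a b)" by (rule norm_diff_sq)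
  ultimately show ?thesis by simp
qed

lemma real_quad_lemma:
  fixes A B :: real
  assumes "\<And>t. 2 * t * A \<le> t^2 * B" and "B \<ge> 0"
  shows "A = 0"
proof -
  define t where "t = A / (B + 1)"
  have pos: "B + 1 > 0" using assms(2) by simp
  have A: "A = t * (B + 1)" using pos by (simp add: t_def)
  have "2 * t * A \<le> t^2 * B" by (rule assms(1))
  then have "2 * t * (t * (B + 1)) \<le> t^2 * B" using A by simp
  then have "t^2 * (B + 2) \<le> 0" by (simp add: power2_eq_square algebra_simps)
  moreover have "t^2 * (B + 2) \<ge> 0" using assms(2) by simp
  ultimately have "t^2 * (B + 2) = 0" by linarith
  then have "t = 0" using assms(2) by simp
  then show ?thesis using A by simp
qed

lemma proj_exists:
  fixes x :: "'a::chilbert"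
  assumes cl: "closed K" and sub: "csubspace K"
  shows "\<exists>p\<in>K. \<forall>k\<in>K. cinner k (x - p) = 0"
proof -
  define d where "d = infdist x K"
  have ne: "K \<noteq> {}" using csubspace_0[OF sub] by auto
  have d_le: "d \<le> norm (x - k)" if "k \<in> K" for k
    using infdist_le[OF that, of x] by (simp add: d_def dist_norm)
  have d_nonneg: "d \<ge> 0" by (simp add: d_def infdist_nonneg)
  have approx: "\<exists>k\<in>K. norm (x - k) < d + e" if "e > 0" for e
  proof -
    have bdd: "bdd_below ((\<lambda>a. dist x a) ` K)" by (rule bdd_belowI[where m=0]) auto
    have "(INF a\<in>K. dist x a) < d + e" using that by (simp add: d_def infdist_notempty[OF ne])
    then have "\<exists>a\<in>K. dist x a < d + e" by (simp only: cINF_less_iff[OF ne bdd])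
    then show ?thesis by (simp add: dist_norm)
  qed
  have "\<forall>n. \<exists>k\<in>K. norm (x - k) < d + inverse (real (Suc n))"
    using approx by simp
  then obtain k where kK: "\<And>n. k n \<in> K" and kd: "\<And>n. norm (x - k n) < d + inverse (real (Suc n))"
    by metis
  have mid: "2 * d \<le> norm ((x - k m) + (x - k n))" for m n
  proof -
    have "scaleR (1/2) (k m + k n) \<in> K" using kK sub by (simp add: csubspace_add csubspace_scaleR)
    then have "d \<le> norm (x - scaleR (1/2) (k m + k n))" by (rule d_le)
    also have "x - scaleR (1/2) (k m + k n) = scaleR (1/2) ((x - k m) + (x - k n))"
      by (simp add: algebra_simps flip: scaleR_add_left)
    finally show ?thesis by simp
  qed
  have par: "(norm (k m - k n))^2 \<le> 2 * (norm (x - k m))^2 + 2 * (norm (x - k n))^2 - 4 * d^2" for m n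
  proof -
    have e1: "(norm ((x - k m) + (x - k n)))^2 + (norm ((x - k m) - (x - k n)))^2 = 2 * (norm (x - k m))^2 + 2 * (norm (x - k n))^2"
      by (rule parallelogram)
    have "(2*d)^2 \<le> (norm ((x - k m) + (x - k n)))^2"
      using mid[of m n] d_nonneg by (intro power_mono) auto
    moreover have "(x - k m) - (x - k n) = k n - k m" by simp
    moreover have "norm (k n - k m) = norm (k m - k n)" by (rule norm_minus_commute)
    ultimately show ?thesis using e1 by (simp add: power_mult_distrib)
  qed
  have bnd: "(norm (x - k n))^2 \<le> d^2 + (2*d+1) * inverse (real (Suc N))" if "N \<le> n" for n N
  proof -
    have i1: "inverse (real (Suc n)) \<le> inverse (real (Suc N))" using that by (simp add: field_simps)
    have i2: "inverse (real (Suc N)) \<le> 1" by (simp add: field_simps)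
    have "norm (x - k n) \<le> d + inverse (real (Suc N))" using kd[of n] i1 by linarith
    then have "(norm (x - k n))^2 \<le> (d + inverse (real (Suc N)))^2" by (intro power_mono) auto
    also have "\<dots> = d^2 + (2*d + inverse (real (Suc N))) * inverse (real (Suc N))"
      by (simp add: power2_eq_square algebra_simps)
    also have "\<dots> \<le> d^2 + (2*d+1) * inverse (real (Suc N))"
      using i2 by (intro add_left_mono mult_right_mono) auto
    finally show ?thesis .
  qed
  have "Cauchy k"
  proof (rule metric_CauchyI)
    fix e :: real assume e: "e > 0"
    obtain N where N: "4 * (2*d+1) / e^2 < real N" using reals_Archimedean2 by blast
    have Npos: "4 * (2*d+1) * inverse (real (Suc N)) < e^2"
    proof -
      have "4 * (2*d+1) < e^2 * real N" using N e by (simp add: field_simps)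
      also have "\<dots> \<le> e^2 * real (Suc N)" by (intro mult_left_mono) auto
      finally have "4 * (2*d+1) < e^2 * real (Suc N)" .
      then show ?thesis by (simp add: field_simps)
    qed
    have "\<forall>m\<ge>N. \<forall>n\<ge>N. dist (k m) (k n) < e"
    proof (intro allI impI)
      fix m n assume "N \<le> m" "N \<le> n"
      have "(norm (k m - k n))^2 \<le> 4 * (2*d+1) * inverse (real (Suc N))"
        using par[of m n] bnd[OF \<open>N \<le> m\<close>] bnd[OF \<open>N \<le> n\<close>] by linarith
      also have "\<dots> < e^2" by (rule Npos)
      finally have "(norm (k m - k n))^2 < e^2" .
      then have "norm (k m - k n) < e" using e by (simp add: power_less_imp_less_base)
      then show "dist (k m) (k n) < e" by (simp add: dist_norm)
    qed
    then show "\<exists>M. \<forall>m\<ge>M. \<forall>n\<ge>M. dist (k m) (k n) < e" by blast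
  qed
  then obtain p where lim: "k \<longlonglongrightarrow> p" using Cauchy_convergent_iff convergent_def by blast
  have pK: "p \<in> K" using closed_sequentially[OF cl] kK lim by blast
  have "norm (x - p) \<le> d"
  proof (rule LIMSEQ_le)
    show "(\<lambda>n. norm (x - k n)) \<longlonglongrightarrow> norm (x - p)" by (intro tendsto_intros lim)
    show "(\<lambda>n. d + inverse (real (Suc n))) \<longlonglongrightarrow> d"
      using tendsto_add[OF tendsto_const LIMSEQ_inverse_real_of_nat, of d] by simp
    show "\<exists>N. \<forall>n\<ge>N. norm (x - k n) \<le> d + inverse (real (Suc n))" using kd less_imp_le by blast
  qed
  then have minp: "norm (x - p) \<le> norm (x - k)" if "k \<in> K" for k using d_le[OF that] by linarith
  define u where "u = x - p"
  have re0: "Re (cinner u k) = 0" if "k \<in> K" for k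
  proof (rule real_quad_lemma)
    show "(norm k)^2 \<ge> 0" by simp
    fix t :: real
    have "p + scaleR t k \<in> K" using pK that sub by (simp add: csubspace_add csubspace_scaleR)
    then have "norm u \<le> norm (u - scaleR t k)" using minp[of "p + scaleR t k"] by (simp add: u_def algebra_simps)
    then have "(norm u)^2 \<le> (norm (u - scaleR t k))^2" by (intro power_mono) auto
    also have "\<dots> = (norm u)^2 + t^2 * (norm k)^2 - 2 * (t * Re (cinner u k))"
      by (simp add: norm_diff_sq cinner_scaleR_right power_mult_distrib abs_mult)
    finally show "2 * t * Re (cinner u k) \<le> t^2 * (norm k)^2" by simp
  qed
  have "cinner k u = 0" if "k \<in> K" for k
  proof -
    have a: "Re (cinner u k) = 0" using re0[OF that] .
    have "scaleC \<i> k \<in> K" using that sub by (simp add: csubspace_scaleC)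
    then have "Re (cinner u (scaleC \<i> k)) = 0" by (rule re0)
    then have b: "Im (cinner u k) = 0" by (simp add: cinner_scaleC_right)
    have "cinner u k = 0" using a b by (simp add: complex_eq_iff)
    then show ?thesis by (metis cinner_commute complex_cnj_zero)
  qed
  then show ?thesis using pK u_def by blast
qed

definition proj :: "'a::chilbert set \<Rightarrow> 'a \<Rightarrow> 'a" where
  "proj K x = (SOME p. p \<in> K \<and> (\<forall>k\<in>K. cinner k (x - p) = 0))"

locale closed_csub =
  fixes K :: "'a::chilbert set"
  assumes cl: "closed K" and sub: "csubspace K"
begin

lemma proj_prop: "proj K x \<in> K \<and> (\<forall>k\<in>K. cinner k (x - proj K x) = 0)"
proof -
  obtain p where "p \<in> K \<and> (\<forall>k\<in>K. cinner k (x - p) = 0)" using proj_exists[OF cl sub, of x] by blast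
  then show ?thesis unfolding proj_def by (rule someI)
qed

end


context closed_csub
begin

lemma proj_in: "proj K x \<in> K" using proj_prop by blast

lemma proj_orth: "k \<in> K \<Longrightarrow> cinner k (x - proj K x) = 0" using proj_prop by blast

lemma proj_orth': "k \<in> K \<Longrightarrow> cinner (x - proj K x) k = 0"
  by (metis cinner_commute complex_cnj_zero proj_orth)

lemma proj_unique:
  assumes "p \<in> K" and "\<And>k. k \<in> K \<Longrightarrow> cinner k (x - p) = 0"
  shows "proj K x = p"
proof -
  have d: "proj K x - p \<in> K" using assms(1) proj_in sub by (simp add: csubspace_diff)
  have "cinner (proj K x - p) (proj K x - p) = cinner (proj K x - p) (x - p) - cinner (proj K x - p) (x - proj K x)"
    by (simp add: cinner_diff_right)
  also have "\<dots> = 0" using assms(2)[OF d] proj_orth[OF d] by simp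
  finally show ?thesis by simp
qed

lemma proj_fix: "x \<in> K \<Longrightarrow> proj K x = x"
  by (rule proj_unique) auto

lemma proj_add: "proj K (x + y) = proj K x + proj K y"
proof (rule proj_unique)
  show "proj K x + proj K y \<in> K" using sub proj_in by (simp add: csubspace_add)
  fix k assume "k \<in> K"
  have e: "x + y - (proj K x + proj K y) = (x - proj K x) + (y - proj K y)" by simp
  show "cinner k (x + y - (proj K x + proj K y)) = 0"
    unfolding e cinner_add_right using proj_orth[OF \<open>k\<in>K\<close>, of x] proj_orth[OF \<open>k\<in>K\<close>, of y] by simp
qed

lemma proj_scaleC: "proj K (scaleC c x) = scaleC c (proj K x)"
proof (rule proj_unique)
  show "scaleC c (proj K x) \<in> K" using sub proj_in by (simp add: csubspace_scaleC)
  fix k assume "k \<in> K"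
  have "scaleC c x - scaleC c (proj K x) = scaleC c (x - proj K x)" by (simp add: scaleC_diff_right)
  then show "cinner k (scaleC c x - scaleC c (proj K x)) = 0"
    using proj_orth[OF \<open>k\<in>K\<close>, of x] by (simp add: cinner_scaleC_right)
qed

lemma proj_norm: "norm (proj K x) \<le> norm x"
proof -
  have "cinner (proj K x) (x - proj K x) = 0" by (rule proj_orth[OF proj_in])
  then have "(norm (proj K x + (x - proj K x)))^2 = (norm (proj K x))^2 + (norm (x - proj K x))^2"
    by (rule pythag)
  then have "(norm (proj K x))^2 \<le> (norm x)^2" by simp
  then show ?thesis by (simp add: power2_le_iff_abs_le)
qed

lemma proj_sym: "cinner (proj K x) y = cinner x (proj K y)"
proof -
  have "cinner (proj K x) y = cinner (proj K x) (proj K y) + cinner (proj K x) (y - proj K y)"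
    by (simp add: cinner_diff_right)
  also have "cinner (proj K x) (y - proj K y) = 0" by (rule proj_orth[OF proj_in])
  also have "cinner x (proj K y) = cinner (proj K x) (proj K y) + cinner (x - proj K x) (proj K y)"
    by (simp add: cinner_diff_left)
  moreover have "cinner (x - proj K x) (proj K y) = 0" by (rule proj_orth'[OF proj_in])
  ultimately show ?thesis by simp
qed

lemma proj_idem: "proj K (proj K x) = proj K x"
  by (rule proj_fix[OF proj_in])

lemma bounded_clinear_proj: "bounded_clinear (proj K)"
  unfolding bounded_clinear_def
proof (intro conjI allI)
  show "bounded_linear (proj K)"
    by (rule bounded_linear_intro[where K=1]) (auto simp: proj_add proj_scaleC scaleR_scaleC proj_norm)
qed (rule proj_scaleC)

end

lemma closed_csub_vimage:
  assumes "closed_csub K" "bounded_clinear B"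
  shows "closed_csub (B -` K)"
proof -
  interpret closed_csub K by fact
  have bl: "bounded_linear B" using assms(2) by (simp add: bounded_clinear_def)
  show ?thesis
  proof
    show "closed (B -` K)"
      by (intro continuous_closed_vimage[OF cl] linear_continuous_at bl)
    have "B 0 = 0" using bl by (simp add: linear_simps)
    then show "csubspace (B -` K)" unfolding csubspace_def
      using sub assms(2) bl by (auto simp: csubspace_def bounded_clinear_def linear_simps)
  qed
qed

lemma closed_csub_Inter:
  assumes "\<And>V. V \<in> S \<Longrightarrow> closed_csub V"
  shows "closed_csub (\<Inter>S)"
proof
  show "closed (\<Inter>S)" using assms closed_csub.cl by blast
  show "csubspace (\<Inter>S)" unfolding csubspace_def
    using assms closed_csub.sub csubspace_0 csubspace_add csubspace_scaleC by blast
qed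

section \<open>Riesz and adjoints\<close>

lemma riesz:
  fixes f :: "'a::chilbert \<Rightarrow> complex"
  assumes bl: "bounded_linear f" and cl: "\<And>c x. f (scaleC c x) = c * f x"
  shows "\<exists>z. \<forall>x. f x = cinner z x"
proof (cases "\<forall>x. f x = 0")
  case True then show ?thesis by (intro exI[of _ 0]) simp
next
  case False
  then obtain w where w: "f w \<noteq> 0" by blast
  define N where "N = f -` {0}"
  have f0: "f 0 = 0" using bl by (simp add: linear_simps)
  have fadd: "f (x + y) = f x + f y" for x y using bl by (simp add: linear_simps)
  have fdiff: "f (x - y) = f x - f y" for x y using bl by (simp add: linear_simps)
  interpret N: closed_csub N
  proof
    show "closed N" unfolding N_def
      using continuous_closed_vimage[of "{0}" f] bl by (simp add: linear_continuous_at)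
    show "csubspace N" unfolding csubspace_def N_def using f0 fadd cl by auto
  qed
  define u where "u = w - proj N w"
  have fu: "f u = f w" using N.proj_in[of w] by (simp add: u_def fdiff N_def)
  then have u0: "u \<noteq> 0" using w f0 by auto
  have uorth: "cinner u k = 0" if "k \<in> N" for k
    using N.proj_orth'[OF that, of w] by (simp add: u_def)
  define z where "z = scaleC (cnj (f u) / complex_of_real ((norm u)^2)) u"
  have "f x = cinner z x" for x
  proof -
    have "scaleC (f x) u - scaleC (f u) x \<in> N"
      by (simp add: N_def fdiff cl mult.commute)
    then have "cinner u (scaleC (f x) u - scaleC (f u) x) = 0" by (rule uorth)
    then have "f x * cinner u u = f u * cinner u x"
      by (simp add: cinner_diff_right cinner_scaleC_right)
    then have "f x * complex_of_real ((norm u)^2) = f u * cinner u x" by (simp add: cinner_self)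
    moreover have "complex_of_real ((norm u)^2) \<noteq> 0" using u0 by simp
    ultimately have "f x = f u * cinner u x / complex_of_real ((norm u)^2)"
      by (simp add: field_simps)
    also have "\<dots> = cinner z x" by (simp add: z_def cinner_scaleC_left)
    finally show ?thesis .
  qed
  then show ?thesis by blast
qed

lemma adj_exists:
  assumes "bounded_clinear (T::'a::chilbert \<Rightarrow> 'a)"
  shows "\<exists>S. \<forall>x y. cinner (T x) y = cinner x (S y)"
proof -
  have bl: "bounded_linear T" and cl: "\<And>c x. T (scaleC c x) = scaleC c (T x)"
    using assms by (auto simp: bounded_clinear_def)
  have "\<exists>z. \<forall>x. cinner y (T x) = cinner z x" for y
  proof (rule riesz)
    show "bounded_linear (\<lambda>x. cinner y (T x))"
      using bounded_linear_compose[OF bounded_linear_cinner_right bl] by (simp add: o_def)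
    show "cinner y (T (scaleC c x)) = c * cinner y (T x)" for c x by (simp add: cl cinner_scaleC_right)
  qed
  then obtain S where S: "\<And>x y. cinner y (T x) = cinner (S y) x" by metis
  have "cinner (T x) y = cinner x (S y)" for x y
    by (metis S cinner_commute)
  then show ?thesis by blast
qed

lemma adj_prop:
  assumes "bounded_clinear T" shows "cinner (T x) y = cinner x (adj T y)"
proof -
  have "\<forall>x y. cinner (T x) y = cinner x (adj T y)"
    unfolding adj_def by (rule someI_ex[OF adj_exists[OF assms]])
  then show ?thesis by blast
qed

lemma adj_prop2:
  assumes "bounded_clinear T" shows "cinner (adj T x) y = cinner x (T y)"
  by (metis adj_prop[OF assms] cinner_commute)

lemma adj_eqI:
  assumes "bounded_clinear T" and "\<And>x y. cinner (T x) y = cinner x (S y)"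
  shows "adj T = S"
proof
  fix y show "adj T y = S y"
    by (rule cinner_ext_right) (metis adj_prop[OF assms(1)] assms(2))
qed

lemma adj_bounded_clinear:
  assumes T: "bounded_clinear T" shows "bounded_clinear (adj T)"
proof -
  let ?S = "adj T"
  have add: "?S (x + y) = ?S x + ?S y" for x y
    by (rule cinner_ext_right) (simp add: adj_prop[OF T, symmetric] cinner_add_right)
  have sc: "?S (scaleC c x) = scaleC c (?S x)" for c x
    by (rule cinner_ext_right) (simp add: adj_prop[OF T, symmetric] cinner_scaleC_right)
  obtain K where K: "\<And>x. norm (T x) \<le> norm x * K" "K > 0"
    using T unfolding bounded_clinear_def using bounded_linear.pos_bounded by blast
  have nb: "norm (?S y) \<le> norm y * K" for y
  proof -
    have "(norm (?S y))^2 = Re (cinner (?S y) (?S y))" by (simp add: Re_cinner_self)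
    also have "\<dots> = Re (cinner (T (?S y)) y)" by (simp add: adj_prop[OF T])
    also have "\<dots> \<le> norm (T (?S y)) * norm y" by (rule Re_cinner_le)
    also have "\<dots> \<le> norm (?S y) * K * norm y" using K by (intro mult_right_mono) auto
    finally have "norm (?S y) * norm (?S y) \<le> norm (?S y) * (norm y * K)"
      by (simp add: power2_eq_square algebra_simps)
    then show ?thesis using K(2)
      by (cases "?S y = 0") (auto simp: mult_le_cancel_left_pos)
  qed
  show ?thesis unfolding bounded_clinear_def
    by (intro conjI allI bounded_linear_intro[where K=K] add sc)
       (auto simp: scaleR_scaleC sc nb)
qed


lemma bcl_bl: "bounded_clinear T \<Longrightarrow> bounded_linear T"
  by (simp add: bounded_clinear_def)

lemma bcl_scaleC: "bounded_clinear T \<Longrightarrow> T (scaleC c x) = scaleC c (T x)"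
  by (simp add: bounded_clinear_def)

lemma bcl_add: "bounded_clinear T \<Longrightarrow> T (x + y) = T x + T y"
  by (rule linear_simps(1)[OF bcl_bl])

lemma bcl_diff: "bounded_clinear T \<Longrightarrow> T (x - y) = T x - T y"
  by (rule linear_simps(2)[OF bcl_bl])

lemma bcl_zero: "bounded_clinear T \<Longrightarrow> T 0 = 0"
  by (rule linear_simps(3)[OF bcl_bl])

lemma bcl_scaleR: "bounded_clinear T \<Longrightarrow> T (scaleR r x) = scaleR r (T x)"
  by (rule linear_simps(5)[OF bcl_bl])

lemma bcl_minus: "bounded_clinear T \<Longrightarrow> T (- x) = - T x"
  by (rule linear_simps(4)[OF bcl_bl])

lemma bcl_sum: "bounded_clinear T \<Longrightarrow> T (sum f A) = (\<Sum>i\<in>A. T (f i))"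
  by (induction A rule: infinite_finite_induct) (auto simp: bcl_add bcl_zero)

lemma bcl_id: "bounded_clinear (\<lambda>x. x)"
  unfolding bounded_clinear_def by (simp add: bounded_linear_ident)

lemma bcl_comp: "bounded_clinear A \<Longrightarrow> bounded_clinear B \<Longrightarrow> bounded_clinear (\<lambda>x. A (B x))"
  unfolding bounded_clinear_def using bounded_linear_compose[of A B] by (auto simp: o_def)

lemma bcl_plus: "bounded_clinear A \<Longrightarrow> bounded_clinear B \<Longrightarrow> bounded_clinear (\<lambda>x. A x + B x)"
  unfolding bounded_clinear_def using bounded_linear_add[of A B] by (auto simp: scaleC_add_right)

lemma bcl_minus_fun: "bounded_clinear A \<Longrightarrow> bounded_clinear B \<Longrightarrow> bounded_clinear (\<lambda>x. A x - B x)"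
  unfolding bounded_clinear_def using bounded_linear_sub[of A B] by (auto simp: scaleC_diff_right)

lemma bcl_scaleR_fun: "bounded_clinear A \<Longrightarrow> bounded_clinear (\<lambda>x. scaleR r (A x))"
  unfolding bounded_clinear_def
  using bounded_linear_compose[OF bounded_linear_scaleR_right[of r] , of A]
  by (auto simp: o_def scaleR_scaleC scaleC_scaleC mult.commute)

lemma bcl_continuous: "bounded_clinear A \<Longrightarrow> continuous_on S A"
  using bcl_bl linear_continuous_on by blast

lemma closed_csub_fix:
  assumes "bounded_clinear Z"
  shows "closed_csub {y. Z y = y}"
proof
  show "closed {y. Z y = y}"
    by (intro closed_Collect_eq continuous_on_id bcl_continuous assms)
  show "csubspace {y. Z y = y}" unfolding csubspace_def
    using assms by (auto simp: bcl_add bcl_zero bcl_scaleC)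
qed

lemma closed_csub_ker:
  assumes "bounded_clinear Z"
  shows "closed_csub {y. Z y = 0}"
proof
  show "closed {y. Z y = 0}"
    by (intro closed_Collect_eq continuous_on_const bcl_continuous assms)
  show "csubspace {y. Z y = 0}" unfolding csubspace_def
    using assms by (auto simp: bcl_add bcl_zero bcl_scaleC)
qed

section \<open>Commutants\<close>

lemma commutant_bcl: "T \<in> commutant S \<Longrightarrow> bounded_clinear T"
  by (simp add: commutant_def)

lemma commutant_comm: "T \<in> commutant S \<Longrightarrow> A \<in> S \<Longrightarrow> T (A x) = A (T x)"
  unfolding commutant_def by (auto simp: fun_eq_iff)

lemma commutantI: "bounded_clinear T \<Longrightarrow> (\<And>A x. A \<in> S \<Longrightarrow> T (A x) = A (T x)) \<Longrightarrow> T \<in> commutant S"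
  unfolding commutant_def by (auto simp: fun_eq_iff)

lemma commutant_id: "(\<lambda>x. x) \<in> commutant S"
  by (rule commutantI[OF bcl_id]) simp

lemma commutant_comp: "A \<in> commutant S \<Longrightarrow> B \<in> commutant S \<Longrightarrow> (\<lambda>x. A (B x)) \<in> commutant S"
proof (rule commutantI)
  assume a: "A \<in> commutant S" and b: "B \<in> commutant S"
  show "bounded_clinear (\<lambda>x. A (B x))" using a b by (simp add: bcl_comp commutant_bcl)
  fix C x assume c: "C \<in> S"
  show "A (B (C x)) = C (A (B x))" using commutant_comm[OF a c] commutant_comm[OF b c] by simp
qed

lemma commutant_plus:
  "S \<subseteq> {T. bounded_clinear T} \<Longrightarrow> A \<in> commutant S \<Longrightarrow> B \<in> commutant S \<Longrightarrow> (\<lambda>x. A x + B x) \<in> commutant S"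
proof (rule commutantI)
  assume s: "S \<subseteq> {T. bounded_clinear T}" and a: "A \<in> commutant S" and b: "B \<in> commutant S"
  show "bounded_clinear (\<lambda>x. A x + B x)" using a b by (simp add: bcl_plus commutant_bcl)
  fix C x assume c: "C \<in> S"
  have "bounded_clinear C" using s c by auto
  then show "A (C x) + B (C x) = C (A x + B x)" using commutant_comm[OF a c] commutant_comm[OF b c] by (simp add: bcl_add)
qed

lemma commutant_diff:
  "S \<subseteq> {T. bounded_clinear T} \<Longrightarrow> A \<in> commutant S \<Longrightarrow> B \<in> commutant S \<Longrightarrow> (\<lambda>x. A x - B x) \<in> commutant S"
proof (rule commutantI)
  assume s: "S \<subseteq> {T. bounded_clinear T}" and a: "A \<in> commutant S" and b: "B \<in> commutant S"
  show "bounded_clinear (\<lambda>x. A x - B x)" using a b by (simp add: bcl_minus_fun commutant_bcl)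
  fix C x assume c: "C \<in> S"
  have "bounded_clinear C" using s c by auto
  then show "A (C x) - B (C x) = C (A x - B x)" using commutant_comm[OF a c] commutant_comm[OF b c] by (simp add: bcl_diff)
qed

lemma commutant_scaleR:
  "S \<subseteq> {T. bounded_clinear T} \<Longrightarrow> A \<in> commutant S \<Longrightarrow> (\<lambda>x. scaleR r (A x)) \<in> commutant S"
proof (rule commutantI)
  assume s: "S \<subseteq> {T. bounded_clinear T}" and a: "A \<in> commutant S"
  show "bounded_clinear (\<lambda>x. scaleR r (A x))" using a by (simp add: bcl_scaleR_fun commutant_bcl)
  fix C x assume c: "C \<in> S"
  have "bounded_clinear C" using s c by auto
  then show "scaleR r (A (C x)) = C (scaleR r (A x))" using commutant_comm[OF a c] by (simp add: bcl_scaleR)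
qed

lemma commutant_adj:
  assumes "S \<subseteq> {T. bounded_clinear T}" "\<And>A. A \<in> S \<Longrightarrow> adj A \<in> S" "B \<in> commutant S"
  shows "adj B \<in> commutant S"
proof (rule commutantI)
  have B: "bounded_clinear B" using assms(3) by (rule commutant_bcl)
  show "bounded_clinear (adj B)" by (rule adj_bounded_clinear[OF B])
  fix A y assume A: "A \<in> S"
  have Ab: "bounded_clinear A" using A assms(1) by auto
  have Aab: "bounded_clinear (adj A)" using assms(2)[OF A] assms(1) by auto
  show "adj B (A y) = A (adj B y)"
  proof (rule cinner_ext_right)
    fix x
    have "cinner x (adj B (A y)) = cinner (B x) (A y)" by (simp add: adj_prop[OF B])
    also have "\<dots> = cinner (adj A (B x)) y" by (simp add: adj_prop2[OF Ab])
    also have "adj A (B x) = B (adj A x)" using commutant_comm[OF assms(3) assms(2)[OF A]] by simp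
    also have "cinner (B (adj A x)) y = cinner (adj A x) (adj B y)" by (simp add: adj_prop[OF B])
    also have "\<dots> = cinner x (A (adj B y))" by (simp add: adj_prop2[OF Ab])
    finally show "cinner x (adj B (A y)) = cinner x (A (adj B y))" .
  qed
qed

lemma proj_commute:
  assumes K: "closed_csub K" and B: "bounded_clinear B"
    and inv1: "\<And>y. y \<in> K \<Longrightarrow> B y \<in> K" and inv2: "\<And>y. y \<in> K \<Longrightarrow> adj B y \<in> K"
  shows "proj K (B x) = B (proj K x)"
proof -
  interpret closed_csub K by fact
  show ?thesis
  proof (rule cinner_ext_right)
    fix y
    have "cinner y (proj K (B x)) = cinner (proj K y) (B x)" by (simp add: proj_sym)
    also have "\<dots> = cinner (adj B (proj K y)) x" by (simp add: adj_prop2[OF B])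
    also have "\<dots> = cinner (proj K (adj B (proj K y))) x" using inv2[OF proj_in] by (simp add: proj_fix)
    also have "\<dots> = cinner (adj B (proj K y)) (proj K x)" by (simp add: proj_sym)
    also have "\<dots> = cinner (proj K y) (B (proj K x))" by (simp add: adj_prop2[OF B])
    also have "\<dots> = cinner y (proj K (B (proj K x)))" by (simp add: proj_sym)
    also have "\<dots> = cinner y (B (proj K x))" using inv1[OF proj_in] by (simp add: proj_fix)
    finally show "cinner y (proj K (B x)) = cinner y (B (proj K x))" .
  qed
qed


locale vna =
  fixes M :: "('a::chilbert \<Rightarrow> 'a) set"
  assumes vN: "von_neumann_algebra M"
begin

lemma M_bcl: "A \<in> M \<Longrightarrow> bounded_clinear A"
  using vN unfolding von_neumann_algebra_def by auto

lemma M_sub: "M \<subseteq> {T. bounded_clinear T}"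
  using M_bcl by auto

lemma M_adj: "A \<in> M \<Longrightarrow> adj A \<in> M"
  using vN unfolding von_neumann_algebra_def by auto

lemma M_eq: "commutant (commutant M) = M"
  using vN unfolding von_neumann_algebra_def by auto

lemma M'_sub: "commutant M \<subseteq> {T. bounded_clinear T}"
  using commutant_bcl by auto

lemma M'_adj: "B \<in> commutant M \<Longrightarrow> adj B \<in> commutant M"
  by (rule commutant_adj[OF M_sub M_adj])

lemma inM: "bounded_clinear T \<Longrightarrow> (\<And>B x. B \<in> commutant M \<Longrightarrow> T (B x) = B (T x)) \<Longrightarrow> T \<in> M"
  using commutantI[of T "commutant M"] M_eq by auto

lemma M_id: "(\<lambda>x. x) \<in> M"
  using commutant_id M_eq by metis

lemma M_comp: "A \<in> M \<Longrightarrow> B \<in> M \<Longrightarrow> (\<lambda>x. A (B x)) \<in> M"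
  using commutant_comp M_eq by metis

lemma M_plus: "A \<in> M \<Longrightarrow> B \<in> M \<Longrightarrow> (\<lambda>x. A x + B x) \<in> M"
  using commutant_plus[OF M'_sub] M_eq by metis

lemma M_diff: "A \<in> M \<Longrightarrow> B \<in> M \<Longrightarrow> (\<lambda>x. A x - B x) \<in> M"
  using commutant_diff[OF M'_sub] M_eq by metis

lemma M_scaleR: "A \<in> M \<Longrightarrow> (\<lambda>x. scaleR r (A x)) \<in> M"
  using commutant_scaleR[OF M'_sub] M_eq by metis

lemma M_M'_comm: "A \<in> M \<Longrightarrow> B \<in> commutant M \<Longrightarrow> A (B x) = B (A x)"
  using commutant_comm[of A "commutant M" B x] M_eq by metis

lemma proj_is_projection:
  assumes "is_projection M P"
  shows "P \<in> M" "P (P x) = P x" "cinner (P x) y = cinner x (P y)" "bounded_clinear P"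
proof -
  show "P \<in> M" using assms by (simp add: is_projection_def)
  then show b: "bounded_clinear P" by (rule M_bcl)
  show "P (P x) = P x" using assms by (simp add: is_projection_def fun_eq_iff)
  have "adj P = P" using assms by (simp add: is_projection_def)
  then show "cinner (P x) y = cinner x (P y)" using adj_prop[OF b] by metis
qed

lemma is_projectionI:
  assumes "P \<in> M" "\<And>x. P (P x) = P x" "\<And>x y. cinner (P x) y = cinner x (P y)"
  shows "is_projection M P"
  unfolding is_projection_def using assms adj_eqI[OF M_bcl[OF assms(1)], of P] by (auto simp: fun_eq_iff)

lemma central_in: "central_projection M Z \<Longrightarrow> Z \<in> M"
  by (simp add: central_projection_def is_projection_def)

lemma central_in': "central_projection M Z \<Longrightarrow> Z \<in> commutant M"
  by (simp add: central_projection_def)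

lemma central_bcl: "central_projection M Z \<Longrightarrow> bounded_clinear Z"
  by (simp add: central_in M_bcl)

lemma central_idem: "central_projection M Z \<Longrightarrow> Z (Z x) = x' \<Longrightarrow> x' = Z x"
  by (metis central_projection_def proj_is_projection(2))

lemma central_idem': "central_projection M Z \<Longrightarrow> Z (Z x) = Z x"
  using central_idem by metis

lemma central_sym: "central_projection M Z \<Longrightarrow> cinner (Z x) y = cinner x (Z y)"
  by (metis central_projection_def proj_is_projection(3))

lemma central_comm: "central_projection M Z \<Longrightarrow> A \<in> M \<Longrightarrow> Z (A x) = A (Z x)"
  using central_in' M_M'_comm by metis

lemma central_comm2: "central_projection M Z \<Longrightarrow> central_projection M W \<Longrightarrow> Z (W x) = W (Z x)"
  using central_comm central_in by metis

lemma central_comp: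
  assumes Z: "central_projection M Z" and W: "central_projection M W"
  shows "central_projection M (\<lambda>x. Z (W x))"
  unfolding central_projection_def
proof
  show "is_projection M (\<lambda>x. Z (W x))"
  proof (rule is_projectionI)
    show "(\<lambda>x. Z (W x)) \<in> M" using Z W by (simp add: M_comp central_in)
    show "Z (W (Z (W x))) = Z (W x)" for x using central_comm2[OF Z W] central_idem'[OF Z] central_idem'[OF W] by metis
    show "cinner (Z (W x)) y = cinner x (Z (W y))" for x y
      using central_sym[OF Z] central_sym[OF W] central_comm2[OF Z W] by metis
  qed
  show "(\<lambda>x. Z (W x)) \<in> commutant M" using Z W by (simp add: commutant_comp central_in')
qed

lemma central_compl:
  assumes Z: "central_projection M Z"
  shows "central_projection M (\<lambda>x. x - Z x)"
  unfolding central_projection_def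
proof
  have b: "bounded_clinear Z" by (rule central_bcl[OF Z])
  show "is_projection M (\<lambda>x. x - Z x)"
  proof (rule is_projectionI)
    show "(\<lambda>x. x - Z x) \<in> M" using Z M_diff[OF M_id central_in[OF Z]] by simp
    show "x - Z x - Z (x - Z x) = x - Z x" for x using central_idem'[OF Z] by (simp add: bcl_diff[OF b])
    show "cinner (x - Z x) y = cinner x (y - Z y)" for x y
      using central_sym[OF Z] by (simp add: cinner_diff_left cinner_diff_right)
  qed
  show "(\<lambda>x. x - Z x) \<in> commutant M"
    using commutant_diff[OF M_sub commutant_id central_in'[OF Z]] by simp
qed

section \<open>Central support\<close>

definition KT :: "('a \<Rightarrow> 'a) \<Rightarrow> 'a set" where
  "KT T = \<Inter>{V. closed_csub V \<and> (\<forall>A\<in>M. \<forall>x. A (T x) \<in> V)}"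

lemma KT_csub: "closed_csub (KT T)"
  unfolding KT_def by (rule closed_csub_Inter) auto

lemma KT_gen: "A \<in> M \<Longrightarrow> A (T x) \<in> KT T"
  unfolding KT_def by auto

lemma KT_least: "closed_csub V \<Longrightarrow> (\<And>A x. A \<in> M \<Longrightarrow> A (T x) \<in> V) \<Longrightarrow> KT T \<subseteq> V"
  unfolding KT_def by auto

lemma KT_inv:
  assumes B: "bounded_clinear B" and g: "\<And>A x. A \<in> M \<Longrightarrow> B (A (T x)) \<in> KT T"
    and y: "y \<in> KT T"
  shows "B y \<in> KT T"
proof -
  have "KT T \<subseteq> B -` KT T"
    by (rule KT_least[OF closed_csub_vimage[OF KT_csub B]]) (use g in auto)
  then show ?thesis using y by auto
qed

definition ET :: "('a \<Rightarrow> 'a) \<Rightarrow> 'a \<Rightarrow> 'a" where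
  "ET T = proj (KT T)"

lemma ET_props:
  assumes T: "T \<in> M"
  shows "central_projection M (ET T)" "\<And>x. ET T (T x) = T x"
    "\<And>Z. central_projection M Z \<Longrightarrow> (\<And>x. Z (T x) = T x) \<Longrightarrow> ET T (Z x) = ET T x"
proof -
  interpret K: closed_csub "KT T" by (rule KT_csub)
  have Eb: "bounded_clinear (ET T)" unfolding ET_def by (rule K.bounded_clinear_proj)
  have Tb: "bounded_clinear T" by (rule M_bcl[OF T])
  have E'': "ET T \<in> commutant M"
  proof (rule commutantI[OF Eb])
    fix A x assume A: "A \<in> M"
    have inv: "A' y \<in> KT T" if A': "A' \<in> M" and y: "y \<in> KT T" for A' y
      using KT_inv[OF M_bcl[OF A'] _ y] KT_gen M_comp[OF A'] by blast
    show "ET T (A x) = A (ET T x)" unfolding ET_def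
      by (rule proj_commute[OF KT_csub M_bcl[OF A]]) (use inv A M_adj in auto)
  qed
  have EM: "ET T \<in> M"
  proof (rule inM[OF Eb])
    fix B x assume B: "B \<in> commutant M"
    have inv: "B' y \<in> KT T" if B': "B' \<in> commutant M" and y: "y \<in> KT T" for B' y
    proof (rule KT_inv[OF commutant_bcl[OF B'] _ y])
      fix A z assume A: "A \<in> M"
      have "B' (A (T z)) = A (T (B' z))" using M_M'_comm[OF A B'] M_M'_comm[OF T B'] by metis
      then show "B' (A (T z)) \<in> KT T" using KT_gen[OF A] by simp
    qed
    show "ET T (B x) = B (ET T x)" unfolding ET_def
      by (rule proj_commute[OF KT_csub commutant_bcl[OF B]]) (use inv B M'_adj in auto)
  qed
  show cp: "central_projection M (ET T)"
    unfolding central_projection_def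
  proof
    show "is_projection M (ET T)"
      by (rule is_projectionI[OF EM]) (simp_all add: ET_def K.proj_idem K.proj_sym)
  qed (rule E'')
  show "ET T (T x) = T x" for x
    unfolding ET_def using KT_gen[OF M_id, of T x] by (simp add: K.proj_fix)
  fix Z x assume Z: "central_projection M Z" and ZT: "\<And>x. Z (T x) = T x"
  have "KT T \<subseteq> {y. Z y = y}"
  proof (rule KT_least[OF closed_csub_fix[OF central_bcl[OF Z]]])
    fix A x assume "A \<in> M"
    then show "A (T x) \<in> {y. Z y = y}" using central_comm[OF Z \<open>A\<in>M\<close>] ZT by simp
  qed
  then have "Z (ET T x) = ET T x" unfolding ET_def using K.proj_in by auto
  then show "ET T (Z x) = ET T x" using central_comm[OF Z EM] by simp
qed

lemma cs_eq:
  assumes T: "T \<in> M"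
  shows "central_support M T = ET T"
  unfolding central_support_def
proof (rule the_equality)
  show "central_projection M (ET T) \<and> ET T \<circ> T = T \<and>
    (\<forall>Z'. central_projection M Z' \<and> Z' \<circ> T = T \<longrightarrow> ET T \<circ> Z' = ET T)"
    using ET_props[OF T] by (auto simp: fun_eq_iff)
  fix Z assume Z: "central_projection M Z \<and> Z \<circ> T = T \<and>
    (\<forall>Z'. central_projection M Z' \<and> Z' \<circ> T = T \<longrightarrow> Z \<circ> Z' = Z)"
  then have "Z \<circ> ET T = Z" using ET_props[OF T] by (auto simp: fun_eq_iff)
  moreover have "ET T \<circ> Z = ET T" using Z ET_props[OF T] by (auto simp: fun_eq_iff)
  moreover have "Z (ET T x) = ET T (Z x)" for x
    using central_comm[of Z "ET T"] Z central_in[OF ET_props(1)[OF T]] by blast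
  ultimately show "Z = ET T" by (metis comp_apply ext)
qed

lemma cs_central: "T \<in> M \<Longrightarrow> central_projection M (central_support M T)"
  using cs_eq ET_props by simp

lemma cs_fix: "T \<in> M \<Longrightarrow> central_support M T (T x) = T x"
  using cs_eq ET_props by simp

lemma cs_min: "T \<in> M \<Longrightarrow> central_projection M Z \<Longrightarrow> (\<And>x. Z (T x) = T x) \<Longrightarrow>
    central_support M T (Z x) = central_support M T x"
  using cs_eq ET_props by simp

lemma cs_range:
  assumes T: "T \<in> M" and V: "closed_csub V" and g: "\<And>A x. A \<in> M \<Longrightarrow> A (T x) \<in> V"
  shows "central_support M T x \<in> V"
proof -
  interpret K: closed_csub "KT T" by (rule KT_csub)
  have "KT T \<subseteq> V" by (rule KT_least[OF V g])
  then show ?thesis using cs_eq[OF T] K.proj_in unfolding ET_def by auto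
qed


lemma cs_zero:
  assumes T: "T \<in> M" and Z: "central_projection M Z" and ZT: "\<And>x. Z (T x) = 0"
  shows "central_support M T (Z x) = 0"
proof -
  let ?C = "central_support M T"
  have W: "central_projection M (\<lambda>x. x - Z x)" by (rule central_compl[OF Z])
  have "?C (x - Z x) = ?C x" by (rule cs_min[OF T W]) (simp add: ZT)
  moreover have "bounded_clinear ?C" by (rule central_bcl[OF cs_central[OF T]])
  ultimately show ?thesis by (simp add: bcl_diff)
qed

end


lemma summable_on_Cauchy_banach:
  fixes f :: "'i \<Rightarrow> 'b::banach"
  assumes C: "\<And>e. e > 0 \<Longrightarrow> \<exists>F0. finite F0 \<and> F0 \<subseteq> A \<and> (\<forall>H. finite H \<longrightarrow> H \<subseteq> A - F0 \<longrightarrow> norm (sum f H) < e)"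
  shows "f summable_on A"
proof -
  have "\<exists>P. eventually P (finite_subsets_at_top A) \<and> (\<forall>F1 F2. P F1 \<and> P F2 \<longrightarrow> dist (sum f F1) (sum f F2) < e)"
    if e: "e > 0" for e
  proof -
    obtain F0 where F0: "finite F0" "F0 \<subseteq> A" and H: "\<And>H. finite H \<Longrightarrow> H \<subseteq> A - F0 \<Longrightarrow> norm (sum f H) < e/2"
      using C[of "e/2"] e by auto
    define P where "P F \<longleftrightarrow> finite F \<and> F0 \<subseteq> F \<and> F \<subseteq> A" for F
    have ev: "eventually P (finite_subsets_at_top A)"
      unfolding eventually_finite_subsets_at_top P_def using F0 by blast
    have "dist (sum f F1) (sum f F2) < e" if "P F1" "P F2" for F1 F2
    proof -
      have s1: "sum f F1 = sum f F0 + sum f (F1 - F0)"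
        using that(1) unfolding P_def by (metis add.commute sum.subset_diff)
      have s2: "sum f F2 = sum f F0 + sum f (F2 - F0)"
        using that(2) unfolding P_def by (metis add.commute sum.subset_diff)
      have "dist (sum f F1) (sum f F2) = norm (sum f (F1 - F0) - sum f (F2 - F0))"
        by (simp add: dist_norm s1 s2)
      also have "\<dots> \<le> norm (sum f (F1 - F0)) + norm (sum f (F2 - F0))" by (rule norm_triangle_ineq4)
      also have "\<dots> < e/2 + e/2"
        using that H[of "F1 - F0"] H[of "F2 - F0"] unfolding P_def by (intro add_strict_mono) auto
      finally show ?thesis by simp
    qed
    then show ?thesis using ev by blast
  qed
  then have "cauchy_filter (filtermap (sum f) (finite_subsets_at_top A))"
    by (simp add: cauchy_filter_metric_filtermap)
  moreover have "complete (UNIV::'b set)"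
    by (meson Cauchy_convergent UNIV_I complete_def convergent_def)
  ultimately obtain L' where "(sum f \<longlongrightarrow> L') (finite_subsets_at_top A)"
    using complete_uniform[where S=UNIV] by (force simp add: filterlim_def)
  then show ?thesis
    using summable_on_def has_sum_def by blast
qed

lemma pythag_sum:
  fixes f :: "'i \<Rightarrow> 'a::chilbert"
  assumes "finite H" and "\<And>i j. i \<in> H \<Longrightarrow> j \<in> H \<Longrightarrow> i \<noteq> j \<Longrightarrow> cinner (f i) (f j) = 0"
  shows "(norm (sum f H))^2 = (\<Sum>i\<in>H. (norm (f i))^2)"
  using assms
proof (induction H rule: finite_induct)
  case empty then show ?case by simp
next
  case (insert a H)
  have "cinner (f a) (sum f H) = 0"
    using insert.prems insert.hyps by (auto simp: cinner_sum_right intro!: sum.neutral)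
  then have "(norm (f a + sum f H))^2 = (norm (f a))^2 + (norm (sum f H))^2" by (rule pythag)
  then show ?case using insert by simp
qed

context vna
begin

lemma key:
  assumes P: "is_projection M P" and Q: "is_projection M Q" and W: "central_projection M W"
    and h: "\<And>X x. X \<in> M \<Longrightarrow> W (P (X (Q x))) = 0"
  shows "W (central_support M P (central_support M Q x)) = 0"
proof -
  let ?C = "central_support M"
  have PM: "P \<in> M" and QM: "Q \<in> M" using P Q proj_is_projection by auto
  have Pb: "bounded_clinear P" using PM M_bcl by auto
  have WQM: "(\<lambda>x. W (Q x)) \<in> M" using M_comp[OF central_in[OF W] QM] .
  define E where "E = ?C (\<lambda>x. W (Q x))"
  have E: "central_projection M E" unfolding E_def by (rule cs_central[OF WQM])
  have Vc: "closed_csub (\<Inter>{{z. P (X z) = 0} | X. X \<in> M})"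
  proof (rule closed_csub_Inter)
    fix V assume "V \<in> {{z. P (X z) = 0} | X. X \<in> M}"
    then obtain X where X: "X \<in> M" and V: "V = {z. P (X z) = 0}" by auto
    show "closed_csub V" unfolding V by (rule closed_csub_ker[OF M_bcl[OF M_comp[OF PM X]]])
  qed
  have PE: "P (E y) = 0" for y
  proof -
    have "E y \<in> \<Inter>{{z. P (X z) = 0} | X. X \<in> M}" unfolding E_def
    proof (rule cs_range[OF WQM Vc])
      fix A x assume A: "A \<in> M"
      have "P (X (A (W (Q x)))) = 0" if X: "X \<in> M" for X
      proof -
        have XA: "(\<lambda>z. X (A z)) \<in> M" by (rule M_comp[OF X A])
        have "X (A (W (Q x))) = W (X (A (Q x)))" using central_comm[OF W XA] by simp
        then have "P (X (A (W (Q x)))) = W (P (X (A (Q x))))" using central_comm[OF W PM] by simp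
        also have "\<dots> = 0" using h[OF XA] by simp
        finally show ?thesis .
      qed
      then show "A (W (Q x)) \<in> \<Inter>{{z. P (X z) = 0} | X. X \<in> M}" by auto
    qed
    then show ?thesis using M_id by auto
  qed
  have CPE: "?C P (E y) = 0" for y
    by (rule cs_zero[OF PM E]) (metis central_comm[OF E PM] PE)
  define G where "G = (\<lambda>x. W (x - E x))"
  have G: "central_projection M G" unfolding G_def by (rule central_comp[OF W central_compl[OF E]])
  have Wb: "bounded_clinear W" by (rule central_bcl[OF W])
  have Eb: "bounded_clinear E" by (rule central_bcl[OF E])
  have GQ: "G (Q x) = 0" for x
  proof -
    have "E (W (Q x)) = W (Q x)" unfolding E_def by (rule cs_fix[OF WQM])
    then show ?thesis unfolding G_def using central_comm2[OF W E] by (simp add: bcl_diff[OF Wb])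
  qed
  have CQG: "?C Q (G y) = 0" for y by (rule cs_zero[OF QM G GQ])
  have CPc: "central_projection M (?C P)" by (rule cs_central[OF PM])
  have CQc: "central_projection M (?C Q)" by (rule cs_central[OF QM])
  have CPb: "bounded_clinear (?C P)" and CQb: "bounded_clinear (?C Q)" using CPc CQc central_bcl by auto
  have "W (?C P (?C Q x)) = ?C P (?C Q (W x))"
    using central_comm2[OF W CPc] central_comm2[OF W CQc] by simp
  also have "W x = E (W x) + G x" unfolding G_def using central_comm2[OF W E] by (simp add: bcl_diff[OF Wb])
  also have "?C P (?C Q (E (W x) + G x)) = ?C P (?C Q (E (W x)))"
    by (simp add: bcl_add[OF CQb] CQG)
  also have "\<dots> = ?C P (E (?C Q (W x)))" using central_comm2[OF E CQc] by simp
  also have "\<dots> = 0" by (rule CPE)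
  finally show ?thesis .
qed

end


locale fam = vna M for M :: "('a::chilbert \<Rightarrow> 'a) set" +
  fixes P Q T :: "'a \<Rightarrow> 'a" and F :: "('a \<Rightarrow> 'a) set"
  assumes P: "is_projection M P" and Q: "is_projection M Q" and TM: "T \<in> M"
  and Fgood: "\<And>S. S \<in> F \<Longrightarrow> S \<in> M \<and> (\<forall>x. P (S (Q x)) = S x) \<and> (\<forall>x. norm (S x) \<le> norm x) \<and>
                 (\<forall>x. central_support M S (central_support M T x) = 0)"
  and Forth: "\<And>S S' x. S \<in> F \<Longrightarrow> S' \<in> F \<Longrightarrow> S \<noteq> S' \<Longrightarrow> central_support M S (central_support M S' x) = 0"
begin

abbreviation "CS \<equiv> central_support M"

lemma PM: "P \<in> M" and QM: "Q \<in> M" using P Q proj_is_projection by auto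

lemma SM: "S \<in> F \<Longrightarrow> S \<in> M" using Fgood by blast
lemma Sb: "S \<in> F \<Longrightarrow> bounded_clinear S" using SM M_bcl by blast
lemma SC: "S \<in> F \<Longrightarrow> central_projection M (CS S)" using SM cs_central by blast
lemma S_fixC: "S \<in> F \<Longrightarrow> CS S (S x) = S x" using SM cs_fix by blast
lemma S_C: "S \<in> F \<Longrightarrow> S (CS S x) = S x"
  using S_fixC central_comm[OF SC SM] by metis
lemma S_PQ: "S \<in> F \<Longrightarrow> P (S (Q x)) = S x" using Fgood by blast
lemma PS: "S \<in> F \<Longrightarrow> P (S x) = S x"
  using S_PQ proj_is_projection(2)[OF P] by metis
lemma SQ: "S \<in> F \<Longrightarrow> S (Q x) = S x"
  using S_PQ proj_is_projection(2)[OF Q] by metis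
lemma S_norm: "S \<in> F \<Longrightarrow> norm (S x) \<le> norm x" using Fgood by blast
lemma S_CT: "S \<in> F \<Longrightarrow> CS S (CS T x) = 0" using Fgood by blast
lemma CT_S: "S \<in> F \<Longrightarrow> CS T (S x) = 0"
proof -
  assume S: "S \<in> F"
  have "CS T (S x) = CS T (CS S (S x))" using S_fixC[OF S] by simp
  also have "\<dots> = CS S (CS T (S x))" using central_comm2[OF cs_central[OF TM] SC[OF S]] by simp
  also have "\<dots> = 0" by (rule S_CT[OF S])
  finally show ?thesis .
qed

lemma orth_C: "S \<in> F \<Longrightarrow> S' \<in> F \<Longrightarrow> S \<noteq> S' \<Longrightarrow> cinner (CS S x) (CS S' y) = 0"
  using central_sym[OF SC] Forth by (metis cinner_zero_right)

lemma orth_S: "S \<in> F \<Longrightarrow> S' \<in> F \<Longrightarrow> S \<noteq> S' \<Longrightarrow> cinner (S x) (S' y) = 0"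
  using orth_C S_fixC by metis

lemma normSC: "S \<in> F \<Longrightarrow> norm (S x) \<le> norm (CS S x)"
  using S_norm S_C by metis

lemma bessel:
  assumes H: "finite H" "H \<subseteq> F"
  shows "(\<Sum>S\<in>H. (norm (CS S x))^2) \<le> (norm x)^2"
proof -
  define u where "u = (\<Sum>S\<in>H. CS S x)"
  have nu: "(norm u)^2 = (\<Sum>S\<in>H. (norm (CS S x))^2)"
    unfolding u_def by (rule pythag_sum[OF H(1)]) (meson H(2) orth_C subsetD)
  have "cinner (CS S x) x = complex_of_real ((norm (CS S x))^2)" if "S \<in> F" for S
  proof -
    have "cinner (CS S x) x = cinner (CS S (CS S x)) x" using central_idem'[OF SC[OF that]] by simp
    also have "\<dots> = cinner (CS S x) (CS S x)" using central_sym[OF SC[OF that]] by simp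
    finally show ?thesis by (simp add: cinner_self)
  qed
  then have "cinner u x = complex_of_real (\<Sum>S\<in>H. (norm (CS S x))^2)"
    unfolding u_def cinner_sum_left using H by (simp add: subset_iff)
  then have "(norm u)^2 = Re (cinner u x)" using nu by simp
  also have "\<dots> \<le> norm u * norm x" by (rule Re_cinner_le)
  finally have "norm u \<le> norm x"
    by (cases "u = 0") (auto simp: power2_eq_square mult_le_cancel_left_pos)
  then have "(norm u)^2 \<le> (norm x)^2" by (simp add: power_mono)
  then show ?thesis using nu by simp
qed

lemma partial:
  assumes H: "finite H" "H \<subseteq> F"
  shows "(norm (\<Sum>S\<in>H. S x))^2 \<le> (\<Sum>S\<in>H. (norm (CS S x))^2)"
proof -
  have "(norm (\<Sum>S\<in>H. S x))^2 = (\<Sum>S\<in>H. (norm (S x))^2)"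
    by (rule pythag_sum[OF H(1)]) (meson H(2) orth_S subsetD)
  also have "\<dots> \<le> (\<Sum>S\<in>H. (norm (CS S x))^2)"
    using H normSC by (intro sum_mono power_mono) auto
  finally show ?thesis .
qed

lemma partial_norm:
  assumes H: "finite H" "H \<subseteq> F"
  shows "norm (\<Sum>S\<in>H. S x) \<le> norm x"
proof -
  have "(norm (\<Sum>S\<in>H. S x))^2 \<le> (norm x)^2" using partial[OF H, of x] bessel[OF H, of x] by linarith
  then show ?thesis by (simp add: power2_le_iff_abs_le)
qed

lemma summable: "(\<lambda>S. S x) summable_on F"
proof (rule summable_on_Cauchy_banach)
  fix e :: real assume e: "e > 0"
  define g where "g S = (norm (CS S x))^2" for S
  define L where "L = (SUP H\<in>{H. finite H \<and> H \<subseteq> F}. sum g H)"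
  have bdd: "bdd_above (sum g ` {H. finite H \<and> H \<subseteq> F})"
    by (rule bdd_aboveI[where M="(norm x)^2"]) (auto simp: g_def bessel)
  have ne: "{H. finite H \<and> H \<subseteq> F} \<noteq> {}" by blast
  have le: "sum g H \<le> L" if "finite H" "H \<subseteq> F" for H
    unfolding L_def by (rule cSUP_upper[OF _ bdd]) (use that in auto)
  have "L - e^2 < (SUP H\<in>{H. finite H \<and> H \<subseteq> F}. sum g H)" using e by (simp add: L_def)
  then have "\<exists>H\<in>{H. finite H \<and> H \<subseteq> F}. L - e^2 < sum g H" by (subst (asm) less_cSUP_iff[OF ne bdd])
  then obtain H0 where H0: "finite H0" "H0 \<subseteq> F" "L - e^2 < sum g H0" by blast
  have "norm (\<Sum>S\<in>H. S x) < e" if H: "finite H" "H \<subseteq> F - H0" for H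
  proof -
    have "sum g (H0 \<union> H) = sum g H0 + sum g H"
      using H H0 by (intro sum.union_disjoint) auto
    moreover have "sum g (H0 \<union> H) \<le> L" using H H0 by (intro le) auto
    ultimately have "sum g H < e^2" using H0 by linarith
    moreover have "(norm (\<Sum>S\<in>H. S x))^2 \<le> sum g H" unfolding g_def using H by (intro partial) auto
    ultimately have "(norm (\<Sum>S\<in>H. S x))^2 < e^2" by linarith
    then show ?thesis using e by (simp add: power_less_imp_less_base)
  qed
  then show "\<exists>F0. finite F0 \<and> F0 \<subseteq> F \<and> (\<forall>H. finite H \<longrightarrow> H \<subseteq> F - F0 \<longrightarrow> norm (\<Sum>S\<in>H. S x) < e)"
    using H0 by blast
qed

definition Y0 :: "'a \<Rightarrow> 'a" where "Y0 x = infsum (\<lambda>S. S x) F"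

lemma hs: "((\<lambda>S. S x) has_sum Y0 x) F"
  unfolding Y0_def using summable by simp

lemma hs_lin: "bounded_linear h \<Longrightarrow> ((\<lambda>S. h (S x)) has_sum h (Y0 x)) F"
  using has_sum_bounded_linear[OF _ hs] by blast

lemma Y0_norm: "norm (Y0 x) \<le> norm x"
proof -
  have "((\<lambda>H. norm (sum (\<lambda>S. S x) H)) \<longlongrightarrow> norm (Y0 x)) (finite_subsets_at_top F)"
    using hs[of x] unfolding has_sum_def by (intro tendsto_norm)
  moreover have "\<forall>\<^sub>F H in finite_subsets_at_top F. norm (sum (\<lambda>S. S x) H) \<le> norm x"
    by (intro eventually_finite_subsets_at_top_weakI partial_norm)
  ultimately show ?thesis by (rule tendsto_upperbound) simp
qed

lemma Y0_add: "Y0 (x + y) = Y0 x + Y0 y"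
proof -
  have "((\<lambda>S. S x + S y) has_sum (Y0 x + Y0 y)) F" by (intro has_sum_add hs)
  then have "((\<lambda>S. S (x + y)) has_sum (Y0 x + Y0 y)) F"
    by (rule has_sum_cong[THEN iffD1, rotated]) (simp add: bcl_add Sb)
  then show ?thesis using hs has_sum_unique by blast
qed

lemma Y0_scaleC: "Y0 (scaleC c x) = scaleC c (Y0 x)"
proof -
  have "((\<lambda>S. scaleC c (S x)) has_sum scaleC c (Y0 x)) F" by (intro hs_lin bounded_linear_scaleC)
  then have "((\<lambda>S. S (scaleC c x)) has_sum scaleC c (Y0 x)) F"
    by (rule has_sum_cong[THEN iffD1, rotated]) (simp add: bcl_scaleC Sb)
  then show ?thesis using hs has_sum_unique by blast
qed

lemma Y0_bcl: "bounded_clinear Y0"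
  unfolding bounded_clinear_def
  by (intro conjI allI bounded_linear_intro[where K=1])
     (auto simp: Y0_add Y0_scaleC scaleR_scaleC Y0_norm)

lemma Y0_M: "Y0 \<in> M"
proof (rule inM[OF Y0_bcl])
  fix B x assume B: "B \<in> commutant M"
  have "((\<lambda>S. B (S x)) has_sum B (Y0 x)) F" by (intro hs_lin bcl_bl commutant_bcl[OF B])
  then have "((\<lambda>S. S (B x)) has_sum B (Y0 x)) F"
    by (rule has_sum_cong[THEN iffD1, rotated]) (simp add: M_M'_comm[OF SM B])
  then show "Y0 (B x) = B (Y0 x)" using hs has_sum_unique by blast
qed

lemma Y0_P: "P (Y0 x) = Y0 x"
proof -
  have "((\<lambda>S. P (S x)) has_sum P (Y0 x)) F" by (intro hs_lin bcl_bl M_bcl PM)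
  then have "((\<lambda>S. S x) has_sum P (Y0 x)) F"
    by (rule has_sum_cong[THEN iffD1, rotated]) (simp add: PS)
  then show ?thesis using hs has_sum_unique by blast
qed

lemma Y0_Q: "Y0 (Q x) = Y0 x"
proof -
  have "((\<lambda>S. S x) has_sum Y0 (Q x)) F"
    using hs[of "Q x"] by (rule has_sum_cong[THEN iffD1, rotated]) (simp add: SQ)
  then show ?thesis using hs has_sum_unique by blast
qed

lemma Y0_C:
  assumes S0: "S0 \<in> F"
  shows "CS S0 (Y0 x) = S0 x"
proof -
  have "((\<lambda>S. CS S0 (S x)) has_sum CS S0 (Y0 x)) F"
    by (intro hs_lin bcl_bl central_bcl SC S0)
  moreover have "CS S0 (S x) = (if S = S0 then S0 x else 0)" if "S \<in> F" for S
  proof (cases "S = S0")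
    case True then show ?thesis using S_fixC[OF S0] by simp
  next
    case False
    have "CS S0 (S x) = CS S0 (CS S (S x))" using S_fixC[OF that] by simp
    also have "\<dots> = 0" using Forth[OF S0 that] False by metis
    finally show ?thesis using False by simp
  qed
  ultimately have "((\<lambda>S. if S = S0 then S0 x else 0) has_sum CS S0 (Y0 x)) F"
    by (subst (asm) has_sum_cong) auto
  moreover have "((\<lambda>S. if S = S0 then S0 x else 0) has_sum S0 x) F"
  proof -
    have "((\<lambda>S. if S = S0 then S0 x else 0) has_sum S0 x) {S0}"
      using has_sum_finite[of "{S0}" "\<lambda>S. if S = S0 then S0 x else 0"] by simp
    then show ?thesis by (rule has_sum_cong_neutral[THEN iffD1, rotated -1]) (use S0 in auto)
  qed
  ultimately show ?thesis using has_sum_unique by blast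
qed

lemma Y0_CT: "CS T (Y0 x) = 0"
proof -
  have "((\<lambda>S. CS T (S x)) has_sum CS T (Y0 x)) F"
    by (intro hs_lin bcl_bl central_bcl cs_central TM)
  moreover have "((\<lambda>S. CS T (S x)) has_sum 0) F" by (rule has_sum_0) (simp add: CT_S)
  ultimately show ?thesis using has_sum_unique by blast
qed

end


context vna
begin

lemma main:
  assumes P: "is_projection M P" and Q: "is_projection M Q" and Tc: "T \<in> corner P M Q" and e: "\<epsilon> > 0"
  shows "\<exists>Y\<in>corner P M Q. onorm (\<lambda>x. T x - Y x) < \<epsilon> \<and>
           central_support M Y = central_support M P \<circ> central_support M Q"
proof -
  let ?C = "central_support M"
  have PM: "P \<in> M" and QM: "Q \<in> M" using proj_is_projection(1)[OF P] proj_is_projection(1)[OF Q] .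
  have Pi: "P (P x) = P x" and Qi: "Q (Q x) = Q x" for x
    using proj_is_projection(2)[OF P] proj_is_projection(2)[OF Q] .
  obtain X0 where X0: "X0 \<in> M" "T = P \<circ> X0 \<circ> Q" using Tc unfolding corner_def by auto
  have Teq: "T = (\<lambda>x. P (X0 (Q x)))" using X0 by (simp add: o_def)
  have TM: "T \<in> M" unfolding Teq by (rule M_comp[OF PM M_comp[OF X0(1) QM]])
  have Tb: "bounded_clinear T" by (rule M_bcl[OF TM])
  have TPQ: "P (T (Q x)) = T x" for x unfolding Teq by (simp add: Pi Qi)
  define good where "good S \<longleftrightarrow> S \<in> M \<and> (\<forall>x. P (S (Q x)) = S x) \<and> (\<forall>x. norm (S x) \<le> norm x) \<and>
      (\<forall>x. ?C S (?C T x) = 0)" for S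
  define Fam where "Fam = {F. (\<forall>S\<in>F. good S) \<and> (\<forall>S\<in>F. \<forall>S'\<in>F. S \<noteq> S' \<longrightarrow> (\<forall>x. ?C S (?C S' x) = 0))}"
  have "\<exists>F\<in>Fam. \<forall>X\<in>Fam. F \<subseteq> X \<longrightarrow> X = F"
  proof (rule Zorn_Lemma, rule ballI)
    fix Ch assume ch: "Ch \<in> chains Fam"
    have sub: "Ch \<subseteq> Fam" using chainsD2[OF ch] .
    show "\<Union>Ch \<in> Fam" unfolding Fam_def
    proof (intro CollectI conjI ballI impI allI)
      fix S assume "S \<in> \<Union>Ch" then show "good S" using sub unfolding Fam_def by blast
    next
      fix S S' x assume S: "S \<in> \<Union>Ch" and S': "S' \<in> \<Union>Ch" and ne: "S \<noteq> S'"
      then obtain A B where AB: "A \<in> Ch" "B \<in> Ch" "S \<in> A" "S' \<in> B" by blast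
      then have "A \<subseteq> B \<or> B \<subseteq> A" using chainsD[OF ch] by blast
      then obtain G where G: "G \<in> Ch" "S \<in> G" "S' \<in> G" using AB by blast
      then have "G \<in> Fam" using sub by blast
      then show "?C S (?C S' x) = 0" using G ne unfolding Fam_def by blast
    qed
  qed
  then obtain F where F: "F \<in> Fam" and Fmax: "\<And>X. X \<in> Fam \<Longrightarrow> F \<subseteq> X \<Longrightarrow> X = F" by blast
  interpret fam M P Q T F
  proof unfold_locales
    show "is_projection M P" "is_projection M Q" "T \<in> M" by (rule P, rule Q, rule TM)
    fix S assume "S \<in> F"
    then show "S \<in> M \<and> (\<forall>x. P (S (Q x)) = S x) \<and> (\<forall>x. norm (S x) \<le> norm x) \<and> (\<forall>x. ?C S (?C T x) = 0)"
      using F unfolding Fam_def good_def by blast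
  next
    fix S S' x assume "S \<in> F" "S' \<in> F" "S \<noteq> S'"
    then show "?C S (?C S' x) = 0" using F unfolding Fam_def by blast
  qed
  define \<delta> where "\<delta> = \<epsilon> / 2"
  have d: "\<delta> > 0" "\<delta> < \<epsilon>" using e by (auto simp: \<delta>_def)
  define Y where "Y = (\<lambda>x. T x + scaleR \<delta> (Y0 x))"
  have YM: "Y \<in> M" unfolding Y_def by (rule M_plus[OF TM M_scaleR[OF Y0_M]])
  have Yb: "bounded_clinear Y" by (rule M_bcl[OF YM])
  have YPQ: "P (Y (Q x)) = Y x" for x
    unfolding Y_def using M_bcl[OF PM] by (simp add: bcl_add bcl_scaleR TPQ Y0_P Y0_Q)
  have Ycorner: "Y \<in> corner P M Q"
    unfolding corner_def using YM YPQ by (auto intro!: exI[of _ Y] simp: fun_eq_iff)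
  have onorm_le: "onorm (\<lambda>x. T x - Y x) \<le> \<delta>"
  proof (rule onorm_bound)
    show "0 \<le> \<delta>" using d by simp
    fix x
    have "norm (T x - Y x) = \<delta> * norm (Y0 x)" using d by (simp add: Y_def)
    also have "\<dots> \<le> \<delta> * norm x" using d Y0_norm by (intro mult_left_mono) auto
    finally show "norm (T x - Y x) \<le> \<delta> * norm x" .
  qed
  define W where "W = ?C Y"
  define Z where "Z = (\<lambda>x. ?C P (?C Q x))"
  have Wc: "central_projection M W" unfolding W_def by (rule cs_central[OF YM])
  have CPc: "central_projection M (?C P)" by (rule cs_central[OF PM])
  have CQc: "central_projection M (?C Q)" by (rule cs_central[OF QM])
  have Zc: "central_projection M Z" unfolding Z_def by (rule central_comp[OF CPc CQc])
  have Wb: "bounded_clinear W" and Zb: "bounded_clinear Z" using Wc Zc central_bcl by auto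
  have ZY: "Z (Y x) = Y x" for x
  proof -
    have "Z (Y x) = Z (P (Y (Q x)))" by (simp add: YPQ)
    also have "\<dots> = ?C P (P (Y (?C Q (Q x))))" unfolding Z_def
      using central_comm[OF CQc PM] central_comm[OF CQc YM] by simp
    also have "\<dots> = P (Y (Q x))" using cs_fix[OF PM] cs_fix[OF QM] by simp
    finally show ?thesis by (simp add: YPQ)
  qed
  have WZ: "W (Z x) = W x" for x unfolding W_def by (rule cs_min[OF YM Zc ZY])
  define G where "G = (\<lambda>x. Z (x - W x))"
  have Gc: "central_projection M G" unfolding G_def by (rule central_comp[OF Zc central_compl[OF Wc]])
  have Gb: "bounded_clinear G" by (rule central_bcl[OF Gc])
  have GY: "G (Y x) = 0" for x
    unfolding G_def W_def using cs_fix[OF YM] bcl_zero[OF Zb] by simp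
  have CTc: "central_projection M (?C T)" by (rule cs_central[OF TM])
  have CTb: "bounded_clinear (?C T)" by (rule central_bcl[OF CTc])
  have CTY: "?C T (Y x) = T x" for x
    unfolding Y_def by (simp add: bcl_add[OF CTb] bcl_scaleR[OF CTb] Y0_CT cs_fix[OF TM])
  have GT: "G (T x) = 0" for x
  proof -
    have "G (T x) = G (?C T (Y x))" by (simp add: CTY)
    also have "\<dots> = ?C T (G (Y x))" by (rule central_comm2[OF Gc CTc])
    also have "\<dots> = 0" by (simp add: GY bcl_zero[OF CTb])
    finally show ?thesis .
  qed
  have GS: "G (S x) = 0" if S: "S \<in> F" for S x
  proof -
    have CSb: "bounded_clinear (?C S)" by (rule central_bcl[OF SC[OF S]])
    have "?C S (T x) = ?C S (?C T (T x))" by (simp add: cs_fix[OF TM])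
    also have "\<dots> = 0" by (rule S_CT[OF S])
    finally have "?C S (Y x) = scaleR \<delta> (S x)"
      unfolding Y_def by (simp add: bcl_add[OF CSb] bcl_scaleR[OF CSb] Y0_C[OF S])
    then have Sx: "S x = scaleR (1/\<delta>) (?C S (Y x))" using d by simp
    have "G (S x) = scaleR (1/\<delta>) (?C S (G (Y x)))"
      unfolding Sx using central_comm2[OF Gc SC[OF S]] by (simp add: bcl_scaleR[OF Gb])
    also have "\<dots> = 0" by (simp add: GY bcl_zero[OF CSb])
    finally show ?thesis .
  qed
  have G0: "G x = 0" for x
  proof (rule ccontr)
    assume nz: "G x \<noteq> 0"
    have GZ: "G (Z y) = G y" for y
      unfolding G_def using central_comm2[OF Zc Wc] central_idem'[OF Zc]
      by (simp add: bcl_diff[OF Zb])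
    have "\<not> (\<forall>X y. X \<in> M \<longrightarrow> G (P (X (Q y))) = 0)"
    proof
      assume "\<forall>X y. X \<in> M \<longrightarrow> G (P (X (Q y))) = 0"
      then have "G (?C P (?C Q x)) = 0" by (intro key[OF P Q Gc]) auto
      then have "G x = 0" using GZ[of x] unfolding Z_def by simp
      then show False using nz by simp
    qed
    then obtain X x0 where X: "X \<in> M" and Xnz: "G (P (X (Q x0))) \<noteq> 0" by blast
    define S0 where "S0 = (\<lambda>y. G (P (X (Q y))))"
    have S0M: "S0 \<in> M" unfolding S0_def by (rule M_comp[OF central_in[OF Gc] M_comp[OF PM M_comp[OF X QM]]])
    have S0b: "bounded_clinear S0" by (rule M_bcl[OF S0M])
    define n where "n = onorm S0"
    have npos: "n > 0" unfolding n_def using onorm_pos_lt[OF bcl_bl[OF S0b]] Xnz S0_def by auto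
    define S1 where "S1 = (\<lambda>y. scaleR (1/n) (S0 y))"
    have S1M: "S1 \<in> M" unfolding S1_def by (rule M_scaleR[OF S0M])
    have GS1: "G (S1 y) = S1 y" for y
      unfolding S1_def S0_def using central_idem'[OF Gc] by (simp add: bcl_scaleR[OF Gb])
    have S1PQ: "P (S1 (Q y)) = S1 y" for y
    proof -
      have "P (G z) = G (P z)" for z using central_comm[OF Gc PM] by simp
      then show ?thesis unfolding S1_def S0_def using M_bcl[OF PM]
        by (simp add: bcl_scaleR Pi Qi)
    qed
    have S1n: "norm (S1 y) \<le> norm y" for y
    proof -
      have "norm (S0 y) \<le> n * norm y" unfolding n_def by (rule onorm[OF bcl_bl[OF S0b]])
      then show ?thesis unfolding S1_def using npos by (simp add: field_simps)
    qed
    have CS1c: "central_projection M (?C S1)" by (rule cs_central[OF S1M])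
    have CS1b: "bounded_clinear (?C S1)" by (rule central_bcl[OF CS1c])
    have CS1G: "?C S1 (G y) = ?C S1 y" for y by (rule cs_min[OF S1M Gc GS1])
    have CTG: "?C T (G y) = 0" for y by (rule cs_zero[OF TM Gc GT])
    have S1T: "?C S1 (?C T y) = 0" for y
    proof -
      have "?C S1 (?C T y) = ?C S1 (G (?C T y))" by (simp add: CS1G)
      also have "G (?C T y) = ?C T (G y)" by (rule central_comm2[OF Gc CTc])
      finally show ?thesis by (simp add: CTG bcl_zero[OF CS1b])
    qed
    have S1S: "?C S1 (?C S y) = 0" "?C S (?C S1 y) = 0" if S: "S \<in> F" for S y
    proof -
      have CSG: "?C S (G z) = 0" for z by (rule cs_zero[OF SM[OF S] Gc GS[OF S]])
      have a: "?C S1 (?C S z) = 0" for z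
      proof -
        have "?C S1 (?C S z) = ?C S1 (G (?C S z))" by (simp add: CS1G)
        also have "G (?C S z) = ?C S (G z)" by (rule central_comm2[OF Gc SC[OF S]])
        finally show ?thesis by (simp add: CSG bcl_zero[OF CS1b])
      qed
      then show "?C S1 (?C S y) = 0" .
      show "?C S (?C S1 y) = 0" using a central_comm2[OF CS1c SC[OF S]] by metis
    qed
    have S1nz: "S1 x0 \<noteq> 0" unfolding S1_def S0_def using npos Xnz by simp
    have S1notin: "S1 \<notin> F"
    proof
      assume "S1 \<in> F"
      then have "G (S1 x0) = 0" by (rule GS)
      then show False using GS1[of x0] S1nz by simp
    qed
    have "insert S1 F \<in> Fam"
      unfolding Fam_def
    proof (intro CollectI conjI ballI impI allI)
      fix S assume "S \<in> insert S1 F"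
      then show "good S"
      proof
        assume "S = S1"
        then show "good S" unfolding good_def using S1M S1PQ S1n S1T by blast
      next
        assume "S \<in> F" then show "good S" using F unfolding Fam_def by blast
      qed
    next
      fix S S' y assume S: "S \<in> insert S1 F" and S': "S' \<in> insert S1 F" and ne: "S \<noteq> S'"
      show "?C S (?C S' y) = 0"
      proof (cases "S = S1")
        case True
        then have "S' \<in> F" using S' ne by auto
        then show ?thesis using True S1S by blast
      next
        case False
        then have SF: "S \<in> F" using S by auto
        show ?thesis
        proof (cases "S' = S1")
          case True then show ?thesis using SF S1S by blast
        next
          case False
          then have "S' \<in> F" using S' by auto
          then show ?thesis using SF ne Forth by blast
        qed
      qed
    qed
    then have "insert S1 F = F" by (rule Fmax) auto
    then show False using S1notin by blast
  qed
  have "W x = Z x" for x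
  proof -
    have "Z x = Z (W x)" using G0[of x] unfolding G_def by (simp add: bcl_diff[OF Zb])
    also have "\<dots> = W (Z x)" by (rule central_comm2[OF Zc Wc])
    also have "\<dots> = W x" by (rule WZ)
    finally show ?thesis by simp
  qed
  then have "?C Y = ?C P \<circ> ?C Q" unfolding W_def Z_def by (simp add: fun_eq_iff)
  moreover have "onorm (\<lambda>x. T x - Y x) < \<epsilon>" using onorm_le d by simp
  ultimately show ?thesis using Ycorner by blast
qed

end

theorem mainTheorem5:
  fixes M :: "('h::chilbert \<Rightarrow> 'h) set" and P Q T :: "'h \<Rightarrow> 'h" and \<epsilon> :: real
  assumes "von_neumann_algebra M"
    and "is_projection M P" and "is_projection M Q"
    and "T \<in> corner P M Q"
    and "\<epsilon> > 0"
  shows "\<exists>Y\<in>corner P M Q. onorm (\<lambda>x. T x - Y x) < \<epsilon> \<and>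
           central_support M Y = central_support M P \<circ> central_support M Q"
proof -
  interpret vna M by unfold_locales (rule assms(1))
  show ?thesis by (rule main[OF assms(2-5)])
qed

end
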